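(* Let $H:\mathbb{R}^{2d}\to\mathbb{R}$ be continuous with $H(q,-p)=H(q,p)$, and let $\Psi:\mathbb{R}^{2d}\to\mathbb{R}^{2d}$ be a continuous bijection that preserves Lebesgue measure and is reversible with respect to $S(q,p)=(q,-p)$. Let $\Delta=H\circ\Psi-H$. If $m_\Delta=\int_{\mathbb{R}^{2d}}\Delta(q,p)e^{-H(q,p)}dq\,dp$ exists, then $$0\le m_\Delta\le\int_{\mathbb{R}^{2d}}\Delta(q,p)^2e^{-H(q,p)}dq\,dp,$$ and the first inequality is strict unless $\Delta$ vanishes identically. *)

theory Defs
  imports "HOL-Analysis.Analysis"
begin

text \<open>Points of R^{2d} are pairs (q,p) with q,p in R^d; d is encoded by the finite index type 'd.
  The momentum flip S(q,p) = (q,-p).\<close>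
definition momflip :: "((real^'d) \<times> (real^'d)) \<Rightarrow> ((real^'d) \<times> (real^'d))" where
  "momflip x = (fst x, - snd x)"

end

theory Submission
  imports Defs
begin

lemma pointwise_ineq:
  fixes t :: real
  shows "t * (1 - exp (- t)) \<le> t\<^sup>2 * (1 + exp (- t))"
proof (cases "t \<ge> 0")
  case True
  have "1 - exp (- t) \<le> t" using exp_ge_add_one_self[of "-t"] by simp
  hence "t * (1 - exp (- t)) \<le> t * t" using True by (simp add: mult_left_mono)
  also have "\<dots> \<le> t\<^sup>2 * (1 + exp (- t))"
    using mult_left_mono[of 1 "1+exp(-t)" "t*t"] by (simp add: power2_eq_square)
  finally show ?thesis .
next
  case False
  define s where "s = - t"
  have s: "s > 0" using False s_def by simp
  have "exp s * (1 - s) \<le> exp s * exp (- s)"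
    using exp_ge_add_one_self[of "-s"] by (intro mult_left_mono) auto
  hence "exp s * (1 - s) \<le> 1" by (simp add: exp_minus_inverse)
  hence "exp s - 1 \<le> s * (1 + exp s)" using s by (simp add: algebra_simps)
  hence "s * (exp s - 1) \<le> s * (s * (1 + exp s))" using s by (intro mult_left_mono) auto
  thus ?thesis unfolding s_def by (simp add: power2_eq_square algebra_simps)
qed

lemma pointwise_nonneg:
  fixes t :: real
  shows "0 \<le> t * (1 - exp (- t))"
proof (cases "t \<ge> 0")
  case True
  then show ?thesis by simp
next
  case False
  then have "1 - exp (-t) \<le> 0" by simp
  then show ?thesis using False by (simp add: mult_nonpos_nonpos)
qed

lemma pointwise_zero:
  fixes t :: real
  assumes "t * (1 - exp (- t)) = 0" shows "t = 0"
  using assms by auto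

lemma momflip_preserving:
  "distr lborel lborel (momflip :: (real^'d) \<times> (real^'d) \<Rightarrow> _) = lborel"
proof -
  have U: "distr lborel borel uminus = (lborel :: (real^'d) measure)"
    by (subst lborel_affine[of "-1" 0]) (auto simp: density_1 one_ennreal_def[symmetric])
  have I: "distr lborel borel id = (lborel :: (real^'d) measure)"
    by (subst distr_cong[where K=lborel and L=lborel and g=id]) (auto simp: id_def)
  have "(lborel :: ((real^'d) \<times> (real^'d)) measure) = lborel \<Otimes>\<^sub>M lborel"
    by (simp add: lborel_prod)
  also have "\<dots> = distr lborel borel id \<Otimes>\<^sub>M distr lborel borel uminus"
    by (simp add: U I)
  also have "\<dots> = distr (lborel \<Otimes>\<^sub>M lborel) (borel \<Otimes>\<^sub>M borel) (\<lambda>(x, y). (id x, - y))"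
    by (rule pair_measure_distr) (auto simp: U intro: lborel.sigma_finite_measure_axioms)
  also have "\<dots> = distr lborel lborel momflip"
    apply (rule distr_cong)
      apply (simp add: lborel_prod)
     apply (subst borel_prod) apply simp
    by (auto simp: momflip_def)
  finally show ?thesis by simp
qed

theorem theorem6p1:
  fixes H :: "((real^'d) \<times> (real^'d)) \<Rightarrow> real"
    and \<Psi> :: "((real^'d) \<times> (real^'d)) \<Rightarrow> ((real^'d) \<times> (real^'d))"
  assumes H_cont: "continuous_on UNIV H"
    and H_even: "\<And>q p. H (q, - p) = H (q, p)"
    and \<Psi>_cont: "continuous_on UNIV \<Psi>"
    and \<Psi>_bij: "bij \<Psi>"
    and \<Psi>_meas: "\<Psi> \<in> lborel \<rightarrow>\<^sub>M lborel"
    and \<Psi>_vol: "distr lborel lborel \<Psi> = lborel"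
    and \<Psi>_rev: "momflip \<circ> \<Psi> \<circ> momflip = inv \<Psi>"
    and int: "integrable lborel (\<lambda>x. (H (\<Psi> x) - H x) * exp (- H x))"
  shows "0 \<le> (\<integral>x. (H (\<Psi> x) - H x) * exp (- H x) \<partial>lborel)
    \<and> ennreal (\<integral>x. (H (\<Psi> x) - H x) * exp (- H x) \<partial>lborel)
        \<le> (\<integral>\<^sup>+x. ennreal ((H (\<Psi> x) - H x)\<^sup>2 * exp (- H x)) \<partial>lborel)
    \<and> ((\<integral>x. (H (\<Psi> x) - H x) * exp (- H x) \<partial>lborel) = 0 \<longrightarrow> (\<forall>x. H (\<Psi> x) - H x = 0))"
proof -
  define D where "D x = H (\<Psi> x) - H x" for x
  define E where "E x = exp (- H x)" for x
  define T where "T = momflip \<circ> \<Psi>"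
  define m where "m = (\<integral>x. D x * E x \<partial>lborel)"
  define g where "g x = D x * (1 - exp (- D x)) * E x" for x
  define X where "X = (\<integral>\<^sup>+x. ennreal ((D x)\<^sup>2 * E x) \<partial>lborel)"
  have mf_mf: "momflip (momflip x) = x" for x :: "(real^'d) \<times> (real^'d)"
    by (simp add: momflip_def)
  have H_mf: "H (momflip x) = H x" for x
    by (cases x) (simp add: momflip_def H_even)
  have rev: "momflip (\<Psi> (momflip y)) = inv \<Psi> y" for y
    using fun_cong[OF \<Psi>_rev, of y] by simp
  have PsiT: "\<Psi> (T x) = momflip x" for x
  proof -
    have "momflip (\<Psi> (momflip (\<Psi> x))) = x"
      using rev[of "\<Psi> x"] \<Psi>_bij by (simp add: bij_is_inj)
    hence "momflip (momflip (\<Psi> (momflip (\<Psi> x)))) = momflip x" by simp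
    thus ?thesis by (simp add: mf_mf T_def)
  qed
  have DT: "D (T x) = - D x" for x
    unfolding D_def using PsiT[of x] by (simp add: T_def H_mf)
  have ET: "E (T x) = E x * exp (- D x)" for x
    unfolding E_def D_def by (simp add: T_def H_mf exp_add[symmetric])
  have mf_cont: "continuous_on UNIV (momflip :: (real^'d) \<times> (real^'d) \<Rightarrow> _)"
    unfolding momflip_def by (intro continuous_intros)
  have D_cont: "continuous_on UNIV D"
    unfolding D_def
    by (intro continuous_intros continuous_on_compose2[OF H_cont \<Psi>_cont] H_cont) auto
  have E_cont: "continuous_on UNIV E"
    unfolding E_def by (intro continuous_intros H_cont)
  have g_cont: "continuous_on UNIV g"
    unfolding g_def by (intro continuous_intros D_cont E_cont)
  have [measurable]: "D \<in> borel_measurable borel" "E \<in> borel_measurable borel"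
    "g \<in> borel_measurable borel"
    using D_cont E_cont g_cont by (auto intro: borel_measurable_continuous_onI)
  have mf_meas: "momflip \<in> lborel \<rightarrow>\<^sub>M (lborel :: ((real^'d) \<times> (real^'d)) measure)"
    using borel_measurable_continuous_onI[OF mf_cont] by simp
  have T_meas: "T \<in> lborel \<rightarrow>\<^sub>M lborel"
    unfolding T_def using \<Psi>_meas mf_meas by (rule measurable_comp)
  have T_pres: "distr lborel lborel T = lborel"
  proof -
    have "distr lborel lborel T = distr (distr lborel lborel \<Psi>) lborel momflip"
      unfolding T_def by (rule distr_distr[symmetric, OF mf_meas \<Psi>_meas])
    also have "\<dots> = lborel" by (simp add: \<Psi>_vol momflip_preserving)
    finally show ?thesis .
  qed
  have int1: "integrable lborel (\<lambda>x. D x * E x)"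
    using int by (simp add: D_def E_def)
  have "integrable (distr lborel lborel T) (\<lambda>x. D x * E x)"
    using int1 by (simp add: T_pres)
  hence "integrable lborel (\<lambda>x. D (T x) * E (T x))"
    by (rule integrable_distr[OF T_meas])
  hence int2: "integrable lborel (\<lambda>x. D x * E x * exp (- D x))"
    by (simp add: DT ET mult.assoc)
  have "m = integral\<^sup>L (distr lborel lborel T) (\<lambda>x. D x * E x)"
    by (simp add: T_pres m_def)
  also have "\<dots> = (\<integral>x. D (T x) * E (T x) \<partial>lborel)"
    by (rule integral_distr[OF T_meas]) simp
  also have "\<dots> = - (\<integral>x. D x * E x * exp (- D x) \<partial>lborel)"
    by (simp add: DT ET mult.assoc)
  finally have m2: "m = - (\<integral>x. D x * E x * exp (- D x) \<partial>lborel)" .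
  have g_eq: "g x = D x * E x - D x * E x * exp (- D x)" for x
    by (simp add: g_def algebra_simps)
  have int_g: "integrable lborel g"
    unfolding g_eq using int1 int2 by (rule Bochner_Integration.integrable_diff)
  have ig: "(\<integral>x. g x \<partial>lborel) = 2 * m"
    unfolding g_eq using int1 int2 m2 m_def by (simp add: Bochner_Integration.integral_diff)
  have g_nn: "0 \<le> g x" for x
    unfolding g_def using pointwise_nonneg[of "D x"] by (simp add: E_def)
  have m_nn: "0 \<le> m"
    using integral_nonneg_AE[of g lborel] g_nn ig by simp
  have nn_g: "(\<integral>\<^sup>+x. ennreal (g x) \<partial>lborel) = ennreal (2 * m)"
    using nn_integral_eq_integral[OF int_g] g_nn ig by simp
  have "X = integral\<^sup>N (distr lborel lborel T) (\<lambda>x. ennreal ((D x)\<^sup>2 * E x))"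
    by (simp add: T_pres X_def)
  also have "\<dots> = (\<integral>\<^sup>+x. ennreal ((D (T x))\<^sup>2 * E (T x)) \<partial>lborel)"
    by (rule nn_integral_distr[OF T_meas]) simp
  also have "\<dots> = (\<integral>\<^sup>+x. ennreal ((D x)\<^sup>2 * E x * exp (- D x)) \<partial>lborel)"
    by (simp add: DT ET mult.assoc)
  finally have X2: "X = (\<integral>\<^sup>+x. ennreal ((D x)\<^sup>2 * E x * exp (- D x)) \<partial>lborel)" .
  have "ennreal (2 * m) \<le> (\<integral>\<^sup>+x. ennreal ((D x)\<^sup>2 * E x + (D x)\<^sup>2 * E x * exp (- D x)) \<partial>lborel)"
    unfolding nn_g[symmetric]
  proof (rule nn_integral_mono)
    fix x
    have "D x * (1 - exp (- D x)) * E x \<le> (D x)\<^sup>2 * (1 + exp (- D x)) * E x"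
      using pointwise_ineq[of "D x"] by (intro mult_right_mono) (auto simp: E_def)
    thus "ennreal (g x) \<le> ennreal ((D x)\<^sup>2 * E x + (D x)\<^sup>2 * E x * exp (- D x))"
      unfolding g_def by (intro ennreal_leI) (simp add: algebra_simps)
  qed
  also have "\<dots> = X + X"
  proof -
    have Ep: "0 \<le> E x" for x by (simp add: E_def)
    have "(\<integral>\<^sup>+x. ennreal ((D x)\<^sup>2 * E x + (D x)\<^sup>2 * E x * exp (- D x)) \<partial>lborel)
       = (\<integral>\<^sup>+x. ennreal ((D x)\<^sup>2 * E x) + ennreal ((D x)\<^sup>2 * E x * exp (- D x)) \<partial>lborel)"
      using Ep by (intro nn_integral_cong ennreal_plus) auto
    also have "\<dots> = (\<integral>\<^sup>+x. ennreal ((D x)\<^sup>2 * E x) \<partial>lborel)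
        + (\<integral>\<^sup>+x. ennreal ((D x)\<^sup>2 * E x * exp (- D x)) \<partial>lborel)"
      by (rule nn_integral_add) auto
    finally show ?thesis using X2 X_def by simp
  qed
  finally have le2: "ennreal (2 * m) \<le> X + X" .
  have le: "ennreal m \<le> X"
  proof (rule ccontr)
    assume "\<not> ennreal m \<le> X"
    hence "X < ennreal m" by simp
    hence "X + X < ennreal m + ennreal m"
      using \<open>X < ennreal m\<close> by (rule add_strict_mono)
    also have "\<dots> = ennreal (2 * m)" using m_nn by (simp add: ennreal_plus[symmetric])
    finally show False using le2 by simp
  qed
  have zero: "m = 0 \<Longrightarrow> \<forall>x. D x = 0"
  proof
    fix x
    assume "m = 0"
    hence "(\<integral>\<^sup>+x. ennreal (g x) \<partial>lborel) = 0" using nn_g by simp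
    hence "AE x in lborel. ennreal (g x) = 0"
      by (subst (asm) nn_integral_0_iff_AE) auto
    hence ae: "AE x in lborel. x \<notin> {x. g x \<noteq> 0}"
      using g_nn by (auto elim!: AE_mp intro!: AE_I2 order.antisym)
    have op: "open {x. g x \<noteq> 0}"
      using open_Collect_neq[OF g_cont continuous_on_const] by simp
    have "{x. g x \<noteq> 0} \<in> null_sets lborel"
    proof -
      have meas: "{x. g x \<noteq> 0} \<in> sets lborel" using borel_open[OF op] by simp
      show ?thesis using AE_iff_null_sets[OF meas, THEN iffD2, OF ae] .
    qed
    hence "negligible {x. g x \<noteq> 0}"
      unfolding negligible_iff_null_sets by (rule null_sets_completionI)
    hence "{x. g x \<noteq> 0} = {}" using open_not_negligible[OF op] by blast
    hence "g x = 0" by (metis (mono_tags, lifting) empty_Collect_eq)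
    hence "D x * (1 - exp (- D x)) * E x = 0" by (simp only: g_def)
    moreover have "E x \<noteq> 0" by (simp add: E_def)
    ultimately have "D x * (1 - exp (- D x)) = 0" by simp
    thus "D x = 0" by (rule pointwise_zero)
  qed
  have mm: "m = (\<integral>x. (H (\<Psi> x) - H x) * exp (- H x) \<partial>lborel)"
    unfolding m_def D_def E_def ..
  have XX: "X = (\<integral>\<^sup>+x. ennreal ((H (\<Psi> x) - H x)\<^sup>2 * exp (- H x)) \<partial>lborel)"
    unfolding X_def D_def E_def ..
  have z2: "(\<integral>x. (H (\<Psi> x) - H x) * exp (- H x) \<partial>lborel) = 0 \<longrightarrow> (\<forall>x. H (\<Psi> x) - H x = 0)"
    using zero unfolding mm[symmetric] D_def by blast
  show ?thesis
    using m_nn le z2 unfolding mm[symmetric] XX[symmetric] by blast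
qed

end
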